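(* Let $\mathbbm{k}$ be an algebraically closed field of characteristic $0$, and let $\mathscr{A}_1$ be the connected cochain DG algebra whose underlying graded algebra is the free algebra $\mathscr{A}_1^{\#}=\mathbbm{k}\langle x_1,x_2,x_3\rangle$ with $|x_1|=|x_2|=|x_3|=1$, and whose differential is determined by $\partial(x_1)=x_3^2$, $\partial(x_2)=x_2^2$, $\partial(x_3)=0$ (extended by the graded Leibniz rule). Then the cohomology ring of $\mathscr{A}_1$ is $$H(\mathscr{A}_1)=\frac{\mathbbm{k}[\lceil x_3 \rceil, \lceil x_1x_3+x_3x_1 \rceil]}{( \lceil x_3\rceil^2 )},$$ i.e. it is the commutative algebra generated by the classes $\lceil x_3\rceil$ (degree $1$) and $\lceil x_1x_3+x_3x_1\rceil$ (degree $2$) subject only to $\lceil x_3\rceil^2=0$.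
   Context: A cochain DG algebra is a $\mathbb{Z}$-graded algebra $\mathscr{A}$ with a degree $1$ differential $\partial$ satisfying $\partial^2=0$ and $\partial(ab)=\partial(a)b+(-1)^{|a|}a\partial(b)$ for homogeneous $a,b$. For a cocycle $z$, $\lceil z\rceil$ denotes its cohomology class in $H(\mathscr{A})$. *)

theory Defs
  imports "HOL-Computational_Algebra.Polynomial"
begin

datatype gen = X1 | X2 | X3

text \<open>An element of the free algebra is a function from words (lists of generators)
  to coefficients; elements of the free algebra are those with finite support.
  Every generator has degree 1, so the degree of a word is its length.\<close>

type_synonym 'k fa = "gen list \<Rightarrow> 'k"

definition fa_finsupp :: "'k::zero fa \<Rightarrow> bool" where
  "fa_finsupp f \<longleftrightarrow> finite {w. f w \<noteq> 0}"

definition fa_zero :: "'k::zero fa" where "fa_zero = (\<lambda>w. 0)"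
definition fa_one :: "'k::{zero,one} fa" where "fa_one = (\<lambda>w. if w = [] then 1 else 0)"
definition fa_gen :: "gen \<Rightarrow> 'k::{zero,one} fa" where
  "fa_gen x = (\<lambda>w. if w = [x] then 1 else 0)"
definition fa_add :: "'k::plus fa \<Rightarrow> 'k fa \<Rightarrow> 'k fa" where
  "fa_add f g = (\<lambda>w. f w + g w)"
definition fa_minus :: "'k::minus fa \<Rightarrow> 'k fa \<Rightarrow> 'k fa" where
  "fa_minus f g = (\<lambda>w. f w - g w)"
definition fa_smult :: "'k::times \<Rightarrow> 'k fa \<Rightarrow> 'k fa" where
  "fa_smult c f = (\<lambda>w. c * f w)"

definition fa_mult :: "'k::comm_semiring_1 fa \<Rightarrow> 'k fa \<Rightarrow> 'k fa" where
  "fa_mult f g = (\<lambda>w. \<Sum>i\<le>length w. f (take i w) * g (drop i w))"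

definition fa_pow :: "'k::comm_semiring_1 fa \<Rightarrow> nat \<Rightarrow> 'k fa" where
  "fa_pow f n = (fa_mult f ^^ n) fa_one"

fun d_gen :: "gen \<Rightarrow> 'k::comm_ring_1 fa" where
  "d_gen X1 = fa_mult (fa_gen X3) (fa_gen X3)"
| "d_gen X2 = fa_mult (fa_gen X2) (fa_gen X2)"
| "d_gen X3 = fa_zero"

definition fa_word :: "gen list \<Rightarrow> 'k::{zero,one} fa" where
  "fa_word v = (\<lambda>w. if w = v then 1 else 0)"

text \<open>Graded Leibniz rule on words: d(x v) = d(x) v + (-1)^{|x|} x d(v), with |x| = 1.\<close>
fun d_word :: "gen list \<Rightarrow> 'k::comm_ring_1 fa" where
  "d_word [] = fa_zero"
| "d_word (x # v) = fa_minus (fa_mult (d_gen x) (fa_word v)) (fa_mult (fa_gen x) (d_word v))"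

text \<open>Linear extension (meaningful for finitely supported elements).\<close>
definition fa_d :: "'k::comm_ring_1 fa \<Rightarrow> 'k fa" where
  "fa_d f = (\<lambda>w. \<Sum>v\<in>{v. f v \<noteq> 0}. f v * d_word v w)"

definition cocycles :: "'k::comm_ring_1 fa set" where
  "cocycles = {f. fa_finsupp f \<and> fa_d f = fa_zero}"

definition coboundaries :: "'k::comm_ring_1 fa set" where
  "coboundaries = {fa_d g | g. fa_finsupp g}"

definition cohomologous :: "'k::comm_ring_1 fa \<Rightarrow> 'k fa \<Rightarrow> bool" where
  "cohomologous f g \<longleftrightarrow> fa_minus f g \<in> coboundaries"

definition cls_c :: "'k::comm_ring_1 fa" where "cls_c = fa_gen X3"

definition cls_u :: "'k::comm_ring_1 fa" where
  "cls_u = fa_add (fa_mult (fa_gen X1) (fa_gen X3)) (fa_mult (fa_gen X3) (fa_gen X1))"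

text \<open>The polynomial ring k[a,b] is represented as (k[b])[a], i.e. type 'k poly poly,
  outer variable a, inner variable b.\<close>
definition ev_rep :: "'k::comm_ring_1 poly poly \<Rightarrow> 'k fa" where
  "ev_rep p = (\<lambda>w. \<Sum>i\<le>degree p. \<Sum>j\<le>degree (coeff p i).
      coeff (coeff p i) j * fa_mult (fa_pow cls_c i) (fa_pow cls_u j) w)"

end

theory Submission
  imports Defs "HOL-Library.Function_Algebras"
begin


definition lm :: "gen \<Rightarrow> 'k::comm_ring_1 fa \<Rightarrow> 'k fa" where
  "lm g F = fa_mult (fa_gen g) F"
definition shift :: "gen \<Rightarrow> 'k fa \<Rightarrow> 'k fa" where
  "shift g F = (\<lambda>w. F (g # w))"

lemma fa_add_eq: "fa_add f g = f + g" by (simp add: fa_add_def fun_eq_iff)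
lemma fa_minus_eq: "fa_minus f g = f - g" by (simp add: fa_minus_def fun_eq_iff)
lemma fa_zero_eq: "fa_zero = 0" by (simp add: fa_zero_def fun_eq_iff)

lemma lm_Nil[simp]: "lm g F [] = 0"
  by (simp add: lm_def fa_mult_def fa_gen_def)

lemma lm_Cons[simp]: "lm g (F::'k::comm_ring_1 fa) (x # w) = (if x = g then F w else 0)"
proof -
  have "lm g F (x # w) = (\<Sum>i\<le>length w. fa_gen g (x # take i w) * F (drop i w))"
    unfolding lm_def fa_mult_def
    by (simp add: sum.atMost_Suc_shift fa_gen_def del: sum.atMost_Suc)
  also have "\<dots> = (\<Sum>i\<le>length w. if i = 0 then (if x = g then F w else 0) else 0)"
    by (rule sum.cong) (auto simp: fa_gen_def)
  finally show ?thesis by simp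
qed

lemma lm_nz: "lm g F w \<noteq> (0::'k::comm_ring_1) \<Longrightarrow> \<exists>w'. w = g # w' \<and> F w' \<noteq> 0"
  by (cases w) (auto split: if_splits)

lemma shift_apply[simp]: "shift g F w = F (g # w)" by (simp add: shift_def)

lemma fa_ext: "F [] = G [] \<Longrightarrow> (\<And>g w. F (g # w) = G (g # w)) \<Longrightarrow> F = G"
  by (rule ext) (case_tac x, auto)

lemma fa_one_Nil[simp]: "fa_one [] = 1" and fa_one_Cons[simp]: "fa_one (x # w) = 0"
  by (auto simp: fa_one_def)

lemma fa_gen_lm: "fa_gen g = (lm g fa_one :: 'k::comm_ring_1 fa)"
  by (rule fa_ext) (auto simp: fa_gen_def fa_one_def)

lemma fa_word_Nil: "fa_word [] = fa_one" by (simp add: fa_word_def fa_one_def)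
lemma fa_word_Cons: "fa_word (x # v) = (lm x (fa_word v) :: 'k::comm_ring_1 fa)"
  by (rule fa_ext) (auto simp: fa_word_def)

lemma mult_one[simp]: "fa_mult fa_one (G::'k::comm_ring_1 fa) = G"
proof
  fix w show "fa_mult fa_one G w = G w"
    unfolding fa_mult_def
    by (subst sum.cong[OF refl, where h="\<lambda>i. if i = 0 then G w else 0"]) (auto simp: fa_one_def)
qed

lemma mult_lm: "fa_mult (lm g F) G = lm g (fa_mult F (G::'k::comm_ring_1 fa))"
proof (rule fa_ext)
  show "fa_mult (lm g F) G [] = lm g (fa_mult F G) []" by (simp add: fa_mult_def)
  fix x w show "fa_mult (lm g F) G (x # w) = lm g (fa_mult F G) (x # w)"
    unfolding fa_mult_def
    by (simp add: sum.atMost_Suc_shift sum_distrib_left del: sum.atMost_Suc)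
qed

lemma mult_plus: "fa_mult (F + F') G = fa_mult F G + fa_mult F' (G::'k::comm_ring_1 fa)"
  by (simp add: fa_mult_def fun_eq_iff sum.distrib distrib_right)
lemma mult_zero[simp]: "fa_mult 0 G = (0::'k::comm_ring_1 fa)"
  by (simp add: fa_mult_def fun_eq_iff)


section \<open>finite support\<close>

lemma fs_zero[simp]: "fa_finsupp (0::'k::comm_ring_1 fa)" by (simp add: fa_finsupp_def)
lemma fs_plus[simp]: "fa_finsupp F \<Longrightarrow> fa_finsupp G \<Longrightarrow> fa_finsupp (F + (G::'k::comm_ring_1 fa))"
  unfolding fa_finsupp_def by (rule finite_subset[of _ "{w. F w \<noteq> 0} \<union> {w. G w \<noteq> 0}"]) auto
lemma fs_minus[simp]: "fa_finsupp F \<Longrightarrow> fa_finsupp G \<Longrightarrow> fa_finsupp (F - (G::'k::comm_ring_1 fa))"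
  unfolding fa_finsupp_def by (rule finite_subset[of _ "{w. F w \<noteq> 0} \<union> {w. G w \<noteq> 0}"]) auto
lemma fs_uminus[simp]: "fa_finsupp F \<Longrightarrow> fa_finsupp (- (F::'k::comm_ring_1 fa))"
  unfolding fa_finsupp_def by simp
lemma fs_smult[simp]: "fa_finsupp F \<Longrightarrow> fa_finsupp (\<lambda>w. c * (F::'k::comm_ring_1 fa) w)"
  unfolding fa_finsupp_def by (rule finite_subset[of _ "{w. F w \<noteq> 0}"]) auto
lemma fs_lm[simp]: "fa_finsupp F \<Longrightarrow> fa_finsupp (lm g (F::'k::comm_ring_1 fa))"
proof -
  have "{w. lm g F w \<noteq> 0} \<subseteq> Cons g ` {w. F w \<noteq> 0}"
  proof
    fix x assume "x \<in> {w. lm g F w \<noteq> 0}"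
    then show "x \<in> Cons g ` {w. F w \<noteq> 0}" by (cases x) (auto split: if_splits)
  qed
  then show "fa_finsupp F \<Longrightarrow> ?thesis" unfolding fa_finsupp_def by (rule finite_subset) simp
qed
lemma fs_shift[simp]: "fa_finsupp F \<Longrightarrow> fa_finsupp (shift g (F::'k::comm_ring_1 fa))"
  unfolding fa_finsupp_def shift_def
  using finite_vimageI[of "{w. F w \<noteq> 0}" "Cons g"] by (simp add: vimage_def)
lemma fs_one[simp]: "fa_finsupp (fa_one::'k::comm_ring_1 fa)"
  unfolding fa_finsupp_def fa_one_def by simp
lemma fs_word[simp]: "fa_finsupp (fa_word v::'k::comm_ring_1 fa)"
  unfolding fa_finsupp_def fa_word_def by simp
lemma fs_sum: "finite I \<Longrightarrow> (\<And>i. i \<in> I \<Longrightarrow> fa_finsupp (F i)) \<Longrightarrow>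
   fa_finsupp (\<lambda>w. \<Sum>i\<in>I. (F i w::'k::comm_ring_1))"
proof (induction I rule: finite_induct)
  case empty then show ?case by (simp add: fa_finsupp_def)
next
  case (insert x I)
  have "fa_finsupp (F x + (\<lambda>w. \<Sum>i\<in>I. F i w))" using insert by simp
  then show ?case using insert by (simp add: plus_fun_def)
qed

section \<open>d on words\<close>

lemma mult_gen: "fa_mult (fa_gen g) G = lm g G" by (simp add: lm_def)

lemma mult_dgen1: "fa_mult (d_gen X1) G = lm X3 (lm X3 (G::'k::comm_ring_1 fa))"
proof -
  have "fa_mult (d_gen X1) G = fa_mult (lm X3 (fa_gen X3)) G" by (simp add: lm_def)
  also have "\<dots> = lm X3 (fa_mult (fa_gen X3) G)" by (rule mult_lm)
  finally show ?thesis by (simp add: lm_def)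
qed
lemma mult_dgen2: "fa_mult (d_gen X2) G = lm X2 (lm X2 (G::'k::comm_ring_1 fa))"
proof -
  have "fa_mult (d_gen X2) G = fa_mult (lm X2 (fa_gen X2)) G" by (simp add: lm_def)
  also have "\<dots> = lm X2 (fa_mult (fa_gen X2) G)" by (rule mult_lm)
  finally show ?thesis by (simp add: lm_def)
qed
lemma mult_dgen3: "fa_mult (d_gen X3) G = (0::'k::comm_ring_1 fa)"
  by (simp add: fa_zero_eq d_gen.simps)

declare d_word.simps[simp del] d_gen.simps[simp del]
lemma fa_word_apply: "fa_word v w = (if w = v then 1 else 0)" by (simp add: fa_word_def)
lemma d_word_Nil[simp]: "d_word [] = (0::'k::comm_ring_1 fa)" by (simp add: fa_zero_eq d_word.simps)
lemma d_word_Cons: "d_word (x # v) = fa_mult (d_gen x) (fa_word v) - lm x (d_word v::'k::comm_ring_1 fa)"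
  by (simp add: fa_minus_eq lm_def d_word.simps)

lemma d_word_len: "d_word v w \<noteq> (0::'k::comm_ring_1) \<Longrightarrow> length w = Suc (length v)"
proof (induction v arbitrary: w)
  case Nil then show ?case by (simp add: fa_finsupp_def)
next
  case (Cons x v)
  have "(fa_mult (d_gen x) (fa_word v) w::'k) \<noteq> 0 \<or> lm x (d_word v) w \<noteq> (0::'k)"
    using Cons.prems by (auto simp: d_word_Cons)
  moreover have "(fa_mult (d_gen x) (fa_word v) w::'k) \<noteq> (0::'k) \<Longrightarrow> length w = Suc (length (x # v))"
    by (cases x) (auto simp: mult_dgen1 mult_dgen2 mult_dgen3 fa_word_apply split: if_splits dest!: lm_nz)
  moreover have "lm x (d_word v) w \<noteq> (0::'k) \<Longrightarrow> length w = Suc (length (x # v))"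
    using Cons.IH by (auto dest!: lm_nz)
  ultimately show ?case by blast
qed

fun good :: "gen list \<Rightarrow> bool" where
  "good (x # y # r) = (\<not> ((x = X3 \<and> y = X3) \<or> (x = X2 \<and> y = X2)) \<and> good (y # r))"
| "good _ = True"

lemma good_tl: "good (x # w) \<Longrightarrow> good w"
  by (cases w) auto

lemma d_word_good: "d_word v w \<noteq> (0::'k::comm_ring_1) \<Longrightarrow> \<not> good w"
proof (induction v arbitrary: w)
  case Nil then show ?case by (simp add: fa_finsupp_def)
next
  case (Cons x v)
  have "(fa_mult (d_gen x) (fa_word v) w::'k) \<noteq> 0 \<or> lm x (d_word v) w \<noteq> (0::'k)"
    using Cons.prems by (auto simp: d_word_Cons)
  moreover have "(fa_mult (d_gen x) (fa_word v) w::'k) \<noteq> (0::'k) \<Longrightarrow> \<not> good w"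
    by (cases x) (auto simp: mult_dgen1 mult_dgen2 mult_dgen3 fa_word_apply split: if_splits dest!: lm_nz)
  moreover have "lm x (d_word v) w \<noteq> (0::'k) \<Longrightarrow> \<not> good w"
    using Cons.IH by (auto dest!: lm_nz dest: good_tl)
  ultimately show ?case by blast
qed

lemma fs_d_word[simp]: "fa_finsupp (d_word v :: 'k::comm_ring_1 fa)"
proof (induction v)
  case Nil then show ?case by (simp add: fa_finsupp_def)
next
  case (Cons x v)
  then show ?case
    by (cases x) (simp_all only: d_word_Cons mult_dgen1 mult_dgen2 mult_dgen3 diff_0 fs_minus fs_lm fs_word fs_uminus)
qed


section \<open>the differential\<close>

lemma d_sum_over: assumes "finite S" "{v. f v \<noteq> 0} \<subseteq> S"
  shows "fa_d f w = (\<Sum>v\<in>S. f v * d_word v w)"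
  unfolding fa_d_def by (rule sum.mono_neutral_left) (use assms in auto)

lemma supp_fin: "fa_finsupp f \<Longrightarrow> finite {v. f v \<noteq> 0}" by (simp add: fa_finsupp_def)

lemma d_plus: assumes "fa_finsupp F" "fa_finsupp G"
  shows "fa_d (F + G) = fa_d F + fa_d (G::'k::comm_ring_1 fa)"
proof
  fix w
  let ?S = "{v. F v \<noteq> 0} \<union> {v. G v \<noteq> 0}"
  have fin: "finite ?S" using assms by (simp add: fa_finsupp_def)
  have "fa_d (F + G) w = (\<Sum>v\<in>?S. (F + G) v * d_word v w)" by (rule d_sum_over[OF fin]) auto
  moreover have "fa_d F w = (\<Sum>v\<in>?S. F v * d_word v w)" by (rule d_sum_over[OF fin]) auto
  moreover have "fa_d G w = (\<Sum>v\<in>?S. G v * d_word v w)" by (rule d_sum_over[OF fin]) auto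
  ultimately show "fa_d (F + G) w = (fa_d F + fa_d G) w" by (simp add: sum.distrib distrib_right)
qed

lemma d_minus: assumes "fa_finsupp F" "fa_finsupp G"
  shows "fa_d (F - G) = fa_d F - fa_d (G::'k::comm_ring_1 fa)"
proof
  fix w
  let ?S = "{v. F v \<noteq> 0} \<union> {v. G v \<noteq> 0}"
  have fin: "finite ?S" using assms by (simp add: fa_finsupp_def)
  have "fa_d (F - G) w = (\<Sum>v\<in>?S. (F - G) v * d_word v w)" by (rule d_sum_over[OF fin]) auto
  moreover have "fa_d F w = (\<Sum>v\<in>?S. F v * d_word v w)" by (rule d_sum_over[OF fin]) auto
  moreover have "fa_d G w = (\<Sum>v\<in>?S. G v * d_word v w)" by (rule d_sum_over[OF fin]) auto
  ultimately show "fa_d (F - G) w = (fa_d F - fa_d G) w" by (simp add: sum_subtractf left_diff_distrib)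
qed

lemma d_smult: assumes "fa_finsupp F"
  shows "fa_d (\<lambda>w. c * F w) = (\<lambda>w. c * fa_d (F::'k::comm_ring_1 fa) w)"
proof
  fix w
  let ?S = "{v. F v \<noteq> 0}"
  have fin: "finite ?S" using assms by (simp add: fa_finsupp_def)
  have "fa_d (\<lambda>w. c * F w) w = (\<Sum>v\<in>?S. c * F v * d_word v w)" by (rule d_sum_over[OF fin]) auto
  moreover have "fa_d F w = (\<Sum>v\<in>?S. F v * d_word v w)" by (rule d_sum_over[OF fin]) auto
  ultimately show "fa_d (\<lambda>w. c * F w) w = c * fa_d F w" by (simp add: sum_distrib_left mult.assoc)
qed

lemma d_zero[simp]: "fa_d 0 = (0::'k::comm_ring_1 fa)"
  by (simp add: fa_d_def fun_eq_iff)

lemma d_uminus: assumes "fa_finsupp F" shows "fa_d (- F) = - fa_d (F::'k::comm_ring_1 fa)"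
  using d_minus[OF fs_zero assms] by simp

lemma d_sum: "finite I \<Longrightarrow> (\<And>i. i \<in> I \<Longrightarrow> fa_finsupp (F i)) \<Longrightarrow>
   fa_d (\<lambda>w. \<Sum>i\<in>I. (F i w::'k::comm_ring_1)) = (\<lambda>w. \<Sum>i\<in>I. fa_d (F i) w)"
proof (induction I rule: finite_induct)
  case empty then show ?case by (simp add: zero_fun_def[symmetric])
next
  case (insert x I)
  have fs: "fa_finsupp (\<lambda>w. \<Sum>i\<in>I. F i w)" using insert by (intro fs_sum) auto
  have "(\<lambda>w. \<Sum>i\<in>insert x I. F i w) = F x + (\<lambda>w. \<Sum>i\<in>I. F i w)" using insert by (simp add: fun_eq_iff)
  then have "fa_d (\<lambda>w. \<Sum>i\<in>insert x I. F i w) = fa_d (F x) + fa_d (\<lambda>w. \<Sum>i\<in>I. F i w)"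
    using d_plus[OF _ fs, of "F x"] insert by simp
  then show ?case using insert by (simp add: fun_eq_iff)
qed

lemma expand: assumes "finite S" "{v. G v \<noteq> 0} \<subseteq> S"
  shows "(G::'k::comm_ring_1 fa) x = (\<Sum>v\<in>S. G v * fa_word v x)"
proof -
  have "(\<Sum>v\<in>S. G v * fa_word v x) = (\<Sum>v\<in>S. if v = x then G x else 0)"
    by (rule sum.cong) (auto simp: fa_word_apply)
  also have "\<dots> = G x" using assms by (auto simp: sum.delta)
  finally show ?thesis by simp
qed

lemma mult_linear2: assumes "finite S" "{v. G v \<noteq> 0} \<subseteq> S"
  shows "fa_mult H G w = (\<Sum>v\<in>S. G v * fa_mult H (fa_word v) (w::gen list)::'k::comm_ring_1)"
proof -
  have "fa_mult H G w = (\<Sum>i\<le>length w. H (take i w) * (\<Sum>v\<in>S. G v * fa_word v (drop i w)))"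
    unfolding fa_mult_def by (rule sum.cong[OF refl]) (subst expand[OF assms], rule refl)
  also have "\<dots> = (\<Sum>i\<le>length w. \<Sum>v\<in>S. G v * (H (take i w) * fa_word v (drop i w)))"
    by (simp add: sum_distrib_left mult_ac)
  also have "\<dots> = (\<Sum>v\<in>S. \<Sum>i\<le>length w. G v * (H (take i w) * fa_word v (drop i w)))"
    by (rule sum.swap)
  also have "\<dots> = (\<Sum>v\<in>S. G v * fa_mult H (fa_word v) w)"
    by (simp add: fa_mult_def sum_distrib_left)
  finally show ?thesis .
qed

lemma d_lm: assumes fs: "fa_finsupp G"
  shows "fa_d (lm g G) = fa_mult (d_gen g) G - lm g (fa_d (G::'k::comm_ring_1 fa))"
proof
  fix w
  let ?S = "{v. G v \<noteq> 0}"
  have fin: "finite ?S" using fs by (simp add: fa_finsupp_def)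
  have "fa_d (lm g G) w = (\<Sum>v\<in>Cons g ` ?S. lm g G v * d_word v w)"
    by (rule d_sum_over) (use fin in \<open>auto dest!: lm_nz\<close>)
  also have "\<dots> = (\<Sum>v\<in>?S. G v * d_word (g # v) w)"
    by (simp add: sum.reindex)
  also have "\<dots> = (\<Sum>v\<in>?S. G v * fa_mult (d_gen g) (fa_word v) w - G v * lm g (d_word v) w)"
    by (simp add: d_word_Cons right_diff_distrib)
  also have "\<dots> = (\<Sum>v\<in>?S. G v * fa_mult (d_gen g) (fa_word v) w) - (\<Sum>v\<in>?S. G v * lm g (d_word v) w)"
    by (rule sum_subtractf)
  also have "(\<Sum>v\<in>?S. G v * fa_mult (d_gen g) (fa_word v) w) = fa_mult (d_gen g) G w"
    by (rule mult_linear2[symmetric, OF fin]) auto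
  also have "(\<Sum>v\<in>?S. G v * lm g (d_word v) w) = lm g (fa_d G) w"
    by (cases w) (auto simp: d_sum_over[OF fin])
  finally show "fa_d (lm g G) w = (fa_mult (d_gen g) G - lm g (fa_d G)) w" by simp
qed

lemma d_lm1: "fa_finsupp G \<Longrightarrow> fa_d (lm X1 G) = lm X3 (lm X3 G) - lm X1 (fa_d (G::'k::comm_ring_1 fa))"
  by (simp add: d_lm mult_dgen1)
lemma d_lm2: "fa_finsupp G \<Longrightarrow> fa_d (lm X2 G) = lm X2 (lm X2 G) - lm X2 (fa_d (G::'k::comm_ring_1 fa))"
  by (simp add: d_lm mult_dgen2)
lemma d_lm3: "fa_finsupp G \<Longrightarrow> fa_d (lm X3 G) = - lm X3 (fa_d (G::'k::comm_ring_1 fa))"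
  by (simp add: d_lm mult_dgen3)

lemma d_one[simp]: "fa_d fa_one = (0::'k::comm_ring_1 fa)"
proof
  fix w show "fa_d fa_one w = (0::'k fa) w"
    by (subst d_sum_over[of "{[]}"]) (auto simp: fa_one_def)
qed

lemma decomp: "F = (\<lambda>w. F [] * fa_one w) + lm X1 (shift X1 F) + lm X2 (shift X2 F) + lm X3 (shift X3 (F::'k::comm_ring_1 fa))"
proof (rule fa_ext)
  fix g w show "F (g # w) = ((\<lambda>w. F [] * fa_one w) + lm X1 (shift X1 F) + lm X2 (shift X2 F) + lm X3 (shift X3 F)) (g # w)"
    by (cases g) auto
qed simp

lemma lm_plus: "lm g (F + G) = lm g F + lm g (G::'k::comm_ring_1 fa)" by (rule fa_ext) auto
lemma lm_minus: "lm g (F - G) = lm g F - lm g (G::'k::comm_ring_1 fa)" by (rule fa_ext) auto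
lemma lm_uminus: "lm g (- F) = - lm g (F::'k::comm_ring_1 fa)" by (rule fa_ext) auto
lemma lm_zero[simp]: "lm g 0 = (0::'k::comm_ring_1 fa)" by (rule fa_ext) auto
lemma lm_smult: "lm g (\<lambda>w. c * F w) = (\<lambda>w. c * lm g (F::'k::comm_ring_1 fa) w)" by (rule fa_ext) auto

lemma d_decomp: assumes fs: "fa_finsupp F"
  shows "fa_d F = lm X3 (lm X3 (shift X1 F)) - lm X1 (fa_d (shift X1 F)) + (lm X2 (lm X2 (shift X2 F)) - lm X2 (fa_d (shift X2 F))) - lm X3 (fa_d (shift X3 (F::'k::comm_ring_1 fa)))"
proof -
  have "fa_d F = fa_d ((\<lambda>w. F [] * fa_one w) + lm X1 (shift X1 F) + lm X2 (shift X2 F) + lm X3 (shift X3 F))"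
    by (rule arg_cong[OF decomp[of F]])
  also have "\<dots> = fa_d (\<lambda>w. F [] * fa_one w) + fa_d (lm X1 (shift X1 F)) + fa_d (lm X2 (shift X2 F)) + fa_d (lm X3 (shift X3 F))"
    using fs by (simp add: d_plus)
  also have "\<dots> = lm X3 (lm X3 (shift X1 F)) - lm X1 (fa_d (shift X1 F)) + (lm X2 (lm X2 (shift X2 F)) - lm X2 (fa_d (shift X2 F))) - lm X3 (fa_d (shift X3 F))"
    using fs by (simp add: d_smult d_lm1 d_lm2 d_lm3 zero_fun_def[symmetric])
  finally show ?thesis .
qed

lemma dF_Nil: "fa_finsupp F \<Longrightarrow> fa_d F [] = (0::'k::comm_ring_1)"
  by (simp only: d_decomp) simp
lemma dF_X1: "fa_finsupp F \<Longrightarrow> fa_d F (X1 # w) = - fa_d (shift X1 (F::'k::comm_ring_1 fa)) w"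
  by (simp only: d_decomp) simp
lemma dF_X2: "fa_finsupp F \<Longrightarrow> fa_d F (X2 # w) = lm X2 (shift X2 F) w - fa_d (shift X2 (F::'k::comm_ring_1 fa)) w"
  by (simp only: d_decomp) simp
lemma dF_X3: "fa_finsupp F \<Longrightarrow> fa_d F (X3 # w) = lm X3 (shift X1 F) w - fa_d (shift X3 (F::'k::comm_ring_1 fa)) w"
  by (simp only: d_decomp) simp

lemma fs_d[simp]: assumes "fa_finsupp F" shows "fa_finsupp (fa_d (F::'k::comm_ring_1 fa))"
proof -
  let ?S = "{v. F v \<noteq> 0}"
  have fin: "finite ?S" using assms by (simp add: fa_finsupp_def)
  have "{w. fa_d F w \<noteq> 0} \<subseteq> (\<Union>v\<in>?S. {w. d_word v w \<noteq> (0::'k)})"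
  proof
    fix w assume "w \<in> {w. fa_d F w \<noteq> 0}"
    then have "(\<Sum>v\<in>?S. F v * d_word v w) \<noteq> 0" by (simp add: fa_d_def)
    then obtain v where "v \<in> ?S" "F v * d_word v w \<noteq> 0" by (meson sum.not_neutral_contains_not_neutral)
    then show "w \<in> (\<Union>v\<in>?S. {w. d_word v w \<noteq> (0::'k)})" by auto
  qed
  moreover have "finite (\<Union>v\<in>?S. {w. d_word v w \<noteq> (0::'k)})"
    using fin fs_d_word[unfolded fa_finsupp_def] by blast
  ultimately show ?thesis unfolding fa_finsupp_def by (rule finite_subset)
qed


section \<open>homogeneity\<close>

definition homog :: "nat \<Rightarrow> 'k::zero fa \<Rightarrow> bool" where
  "homog n F \<longleftrightarrow> (\<forall>w. F w \<noteq> 0 \<longrightarrow> length w = n)"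
definition trunc :: "nat \<Rightarrow> 'k::zero fa \<Rightarrow> 'k fa" where
  "trunc n F = (\<lambda>w. if length w = n then F w else 0)"

lemma homog_zero[simp]: "homog n (0::'k::comm_ring_1 fa)" by (simp add: homog_def)
lemma homog_plus: "homog n F \<Longrightarrow> homog n G \<Longrightarrow> homog n (F + (G::'k::comm_ring_1 fa))"
  unfolding homog_def by (metis add.right_neutral add_0 plus_fun_apply)
lemma homog_minus: "homog n F \<Longrightarrow> homog n G \<Longrightarrow> homog n (F - (G::'k::comm_ring_1 fa))"
  unfolding homog_def by (metis diff_zero diff_0 minus_apply neg_0_equal_iff_equal)
lemma homog_smult: "homog n F \<Longrightarrow> homog n (\<lambda>w. c * (F::'k::comm_ring_1 fa) w)"
  unfolding homog_def by (metis mult_zero_right)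
lemma homog_lm: "homog n F \<Longrightarrow> homog (Suc n) (lm g (F::'k::comm_ring_1 fa))"
  unfolding homog_def by (auto dest!: lm_nz)
lemma homog_shift: "homog (Suc n) F \<Longrightarrow> homog n (shift g (F::'k::comm_ring_1 fa))"
  unfolding homog_def by auto
lemma homog_one: "homog 0 (fa_one::'k::comm_ring_1 fa)"
  unfolding homog_def fa_one_def by auto
lemma fs_trunc[simp]: "fa_finsupp e \<Longrightarrow> fa_finsupp (trunc n (e::'k::comm_ring_1 fa))"
  unfolding fa_finsupp_def trunc_def by (rule finite_subset[of _ "{w. e w \<noteq> 0}"]) auto
lemma homog_trunc: "homog n (trunc n (e::'k::comm_ring_1 fa))"
  unfolding homog_def trunc_def by auto

lemma d_word_len0: "length w \<noteq> Suc (length v) \<Longrightarrow> (d_word v w::'k::comm_ring_1) = 0"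
  using d_word_len by blast

lemma d_trunc: assumes "fa_finsupp e" shows "fa_d (trunc n e) = trunc (Suc n) (fa_d (e::'k::comm_ring_1 fa))"
proof
  fix w
  let ?S = "{v. e v \<noteq> 0}"
  have fin: "finite ?S" using assms by (simp add: fa_finsupp_def)
  have 1: "fa_d (trunc n e) w = (\<Sum>v\<in>?S. trunc n e v * d_word v w)" by (rule d_sum_over[OF fin]) (auto simp: trunc_def)
  have 2: "fa_d e w = (\<Sum>v\<in>?S. e v * d_word v w)" by (rule d_sum_over[OF fin]) auto
  show "fa_d (trunc n e) w = trunc (Suc n) (fa_d e) w"
  proof (cases "length w = Suc n")
    case True
    have z: "\<And>v. length v \<noteq> n \<Longrightarrow> (d_word v w::'k) = 0" by (rule d_word_len0) (use True in auto)
    have "(\<Sum>v\<in>?S. trunc n e v * d_word v w) = (\<Sum>v\<in>?S. e v * d_word v w)"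
      by (rule sum.cong) (use z in \<open>auto simp: trunc_def\<close>)
    then show ?thesis using 1 2 True by (simp add: trunc_def)
  next
    case False
    have z: "\<And>v. length v = n \<Longrightarrow> (d_word v w::'k) = 0" by (rule d_word_len0) (use False in auto)
    have "(\<Sum>v\<in>?S. trunc n e v * d_word v w) = 0"
      by (rule sum.neutral) (use z in \<open>auto simp: trunc_def\<close>)
    then show ?thesis using 1 False by (simp add: trunc_def)
  qed
qed

section \<open>coboundaries\<close>

lemma cob_d: "fa_finsupp e \<Longrightarrow> fa_d e \<in> coboundaries" by (auto simp: coboundaries_def)
lemma cob_E: "F \<in> coboundaries \<Longrightarrow> \<exists>e. fa_finsupp e \<and> F = fa_d e" by (auto simp: coboundaries_def)
lemma cob_zero: "(0::'k::comm_ring_1 fa) \<in> coboundaries" using cob_d[OF fs_zero] by simp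
lemma cob_fs: "(F::'k::comm_ring_1 fa) \<in> coboundaries \<Longrightarrow> fa_finsupp F" by (auto dest!: cob_E)
lemma cob_plus: "F \<in> coboundaries \<Longrightarrow> G \<in> coboundaries \<Longrightarrow> F + (G::'k::comm_ring_1 fa) \<in> coboundaries"
  by (auto dest!: cob_E simp: d_plus[symmetric] intro!: cob_d)
lemma cob_minus: "F \<in> coboundaries \<Longrightarrow> G \<in> coboundaries \<Longrightarrow> F - (G::'k::comm_ring_1 fa) \<in> coboundaries"
  by (auto dest!: cob_E simp: d_minus[symmetric] intro!: cob_d)
lemma cob_uminus: "F \<in> coboundaries \<Longrightarrow> - (F::'k::comm_ring_1 fa) \<in> coboundaries"
  by (auto dest!: cob_E simp: d_uminus[symmetric] intro!: cob_d)
lemma cob_smult: "F \<in> coboundaries \<Longrightarrow> (\<lambda>w. c * (F::'k::comm_ring_1 fa) w) \<in> coboundaries"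
  by (auto dest!: cob_E simp: d_smult[symmetric] intro!: cob_d)
lemma cob_sum: "finite I \<Longrightarrow> (\<And>i. i \<in> I \<Longrightarrow> F i \<in> coboundaries) \<Longrightarrow>
   (\<lambda>w. \<Sum>i\<in>I. (F i w::'k::comm_ring_1)) \<in> coboundaries"
proof (induction I rule: finite_induct)
  case empty then show ?case using cob_zero by (simp add: zero_fun_def)
next
  case (insert x I)
  have "F x + (\<lambda>w. \<Sum>i\<in>I. F i w) \<in> coboundaries" using insert by (intro cob_plus) auto
  then show ?case using insert by (simp add: plus_fun_def)
qed
lemma cob_good: assumes "(F::'k::comm_ring_1 fa) \<in> coboundaries" "good w" shows "F w = 0"
proof -
  have z: "\<And>v. (d_word v w::'k) = 0" using assms(2) d_word_good by blast
  show ?thesis using assms(1) by (auto dest!: cob_E simp: fa_d_def z)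
qed
lemma cob_lm3: assumes "F \<in> coboundaries" shows "lm X3 (F::'k::comm_ring_1 fa) \<in> coboundaries"
proof -
  obtain e where e: "fa_finsupp e" "F = fa_d e" using cob_E[OF assms] by blast
  have "lm X3 F = fa_d (- lm X3 e)" using e by (simp add: d_uminus d_lm3 lm_uminus)
  then show ?thesis using e by (simp add: cob_d)
qed

lemma cob_homog: assumes "F \<in> coboundaries" "homog n (F::'k::comm_ring_1 fa)"
  shows "\<exists>e. fa_finsupp e \<and> homog (n - 1) e \<and> (n = 0 \<longrightarrow> e = 0) \<and> F = fa_d e"
proof -
  obtain e where e: "fa_finsupp e" "F = fa_d e" using cob_E[OF assms(1)] by blast
  show ?thesis
  proof (cases n)
    case 0
    have "F = 0"
    proof
      fix w show "F w = 0 w"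
      proof (cases w)
        case Nil then show ?thesis using e dF_Nil by simp
      next
        case (Cons x v) then show ?thesis using assms(2) 0 by (auto simp: homog_def)
      qed
    qed
    then show ?thesis using 0 by (intro exI[of _ 0]) simp
  next
    case (Suc k)
    have "fa_d (trunc k e) = trunc (Suc k) F" using e by (simp add: d_trunc)
    also have "\<dots> = F" using assms(2) Suc by (auto simp: trunc_def homog_def fun_eq_iff)
    finally show ?thesis using Suc e by (intro exI[of _ "trunc k e"]) (simp add: homog_trunc)
  qed
qed

lemma x2_cob: assumes fs: "fa_finsupp c" and dc: "fa_d c = lm X2 c"
  shows "lm X2 (c::'k::comm_ring_1 fa) \<in> coboundaries"
proof -
  have "lm X2 c = fa_d (lm X2 (shift X2 c))"
  proof (rule fa_ext)
    fix g w show "lm X2 c (g # w) = fa_d (lm X2 (shift X2 c)) (g # w)"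
    proof (cases g)
      case X2
      have "fa_d c (X2 # w) = lm X2 (shift X2 c) w - fa_d (shift X2 c) w" using dF_X2[OF fs] .
      then show ?thesis using X2 fs by (simp add: d_lm2 dc)
    qed (use fs in \<open>simp_all add: d_lm2\<close>)
  qed (use fs in \<open>simp add: d_lm2\<close>)
  then show ?thesis using fs by (simp add: cob_d)
qed

section \<open>the representatives\<close>

fun U :: "nat \<Rightarrow> 'k::comm_ring_1 fa" where
  "U 0 = fa_one"
| "U (Suc m) = lm X1 (lm X3 (U m)) + lm X3 (lm X1 (U m))"

lemma fs_U[simp]: "fa_finsupp (U m)" by (induction m) (simp_all del: plus_fun_apply)
lemma homog_U: "homog (2 * m) (U m)"
proof (induction m)
  case 0 then show ?case by (simp add: homog_one)
next
  case (Suc m) then show ?case by (simp del: plus_fun_apply add: homog_plus homog_lm)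
qed
lemma d_U[simp]: "fa_d (U m :: 'k::comm_ring_1 fa) = 0"
proof (induction m)
  case 0 then show ?case by simp
next
  case (Suc m)
  then show ?case by (simp add: d_plus d_lm1 d_lm3 lm_uminus lm_minus del: plus_fun_apply minus_apply zero_fun_apply uminus_apply)
qed

fun w0 :: "nat \<Rightarrow> gen list" where
  "w0 0 = []"
| "w0 (Suc m) = X1 # X3 # w0 m"

lemma good_w0: "good (w0 m) \<and> good (X3 # w0 m)"
  by (induction m) auto

lemma U_w0: "(U j :: 'k::comm_ring_1 fa) (w0 k) = (if j = k then 1 else 0)"
  by (induction j arbitrary: k; case_tac k) auto

lemma U_X3w0: "(U j :: 'k::comm_ring_1 fa) (X3 # w0 k) = 0"
  by (induction j arbitrary: k; case_tac k) auto

lemma lm3_w0: "lm X3 (F::'k::comm_ring_1 fa) (w0 k) = 0" by (cases k) auto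
lemma T_w0: "((lm X3 ^^ i) (U j) :: 'k::comm_ring_1 fa) (w0 k) = (if i = 0 \<and> j = k then 1 else 0)"
  by (cases i) (auto simp: U_w0 lm3_w0 simp del: w0.simps)

lemma T_X3w0: "((lm X3 ^^ i) (U j) :: 'k::comm_ring_1 fa) (X3 # w0 k) = (if i = 1 \<and> j = k then 1 else 0)"
  by (cases i) (auto simp: U_X3w0 T_w0)

lemma fs_T[simp]: "fa_finsupp ((lm X3 ^^ i) (U j) :: 'k::comm_ring_1 fa)"
  by (induction i) auto
lemma d_T[simp]: "fa_d ((lm X3 ^^ i) (U j) :: 'k::comm_ring_1 fa) = 0"
proof (induction i)
  case (Suc i) then show ?case by (simp add: d_lm3 del: zero_fun_apply uminus_apply)
qed simp
lemma homog_T: "homog (i + 2 * j) ((lm X3 ^^ i) (U j) :: 'k::comm_ring_1 fa)"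
  by (induction i) (auto simp: homog_U intro: homog_lm)

lemma cob_T: "2 \<le> i \<Longrightarrow> ((lm X3 ^^ i) (U j) :: 'k::comm_ring_1 fa) \<in> coboundaries"
proof -
  assume "2 \<le> i"
  then obtain k where k: "i = Suc (Suc k)" by (metis add_2_eq_Suc le_Suc_ex)
  have "fa_d (lm X1 ((lm X3 ^^ k) (U j))) = ((lm X3 ^^ i) (U j) :: 'k fa)"
    by (simp add: k d_lm1)
  then show ?thesis by (metis cob_d fs_T fs_lm)
qed



definition rr :: "nat \<Rightarrow> 'k::comm_ring_1 fa" where
  "rr n = (lm X3 ^^ (n mod 2)) (U (n div 2))"

lemma fs_rr[simp]: "fa_finsupp (rr n)" by (simp add: rr_def)
lemma homog_rr: "homog n (rr n)"
proof -
  have "homog (n mod 2 + 2 * (n div 2)) (rr n)" unfolding rr_def by (rule homog_T)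
  then show ?thesis by simp
qed

lemma main:
  fixes z :: "'k::comm_ring_1 fa"
  shows "fa_finsupp z \<Longrightarrow> homog n z \<Longrightarrow> fa_d z = 0 \<Longrightarrow> \<exists>l. z - (\<lambda>w. l * rr n w) \<in> coboundaries"
proof (induction n arbitrary: z)
  case 0
  have "z = (\<lambda>w. z [] * rr 0 w)"
  proof (rule fa_ext)
    fix g w show "z (g # w) = (\<lambda>w. z [] * rr 0 w) (g # w)" using 0(2) by (auto simp: homog_def rr_def)
  qed (simp add: rr_def)
  then have "z - (\<lambda>w. z [] * rr 0 w) = 0" by simp
  then have "z - (\<lambda>w. z [] * rr 0 w) \<in> coboundaries" using cob_zero by simp
  then show ?case by blast
next
  case (Suc n z)
  note fs = Suc.prems(1) and hz = Suc.prems(2) and dz = Suc.prems(3)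
  define a where "a = shift X3 z"
  define b where "b = shift X1 z"
  define c where "c = shift X2 z"
  have fsa: "fa_finsupp a" "fa_finsupp b" "fa_finsupp c" using fs by (simp_all add: a_def b_def c_def)
  have ha: "homog n a" "homog n b" "homog n c" using hz by (simp_all add: a_def b_def c_def homog_shift)
  have z0: "z [] = 0" using hz by (auto simp: homog_def)
  have db: "fa_d b = 0"
  proof
    fix w have "fa_d z (X1 # w) = - fa_d b w" using dF_X1[OF fs] by (simp add: b_def)
    then show "fa_d b w = 0 w" using dz by simp
  qed
  have dc: "fa_d c = lm X2 c"
  proof
    fix w have "fa_d z (X2 # w) = lm X2 c w - fa_d c w" using dF_X2[OF fs] by (simp add: c_def)
    then show "fa_d c w = lm X2 c w" using dz by simp
  qed
  have da: "fa_d a = lm X3 b"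
  proof
    fix w have "fa_d z (X3 # w) = lm X3 b w - fa_d a w" using dF_X3[OF fs] by (simp add: a_def b_def)
    then show "fa_d a w = lm X3 b w" using dz by simp
  qed
  have cobc: "lm X2 c \<in> coboundaries" using x2_cob[OF fsa(3) dc] .
  obtain l where l: "b - (\<lambda>w. l * rr n w) \<in> coboundaries" using Suc.IH[OF fsa(2) ha(2) db] by blast
  have "homog n (b - (\<lambda>w. l * rr n w))" using ha(2) by (intro homog_minus homog_smult homog_rr)
  then obtain e where e: "fa_finsupp e" "homog (n - 1) e" "n = 0 \<longrightarrow> e = 0" "b - (\<lambda>w. l * rr n w) = fa_d e"
    using cob_homog[OF l] by blast
  have ebw: "\<And>w. b w - l * rr n w = fa_d e w" using fun_cong[OF e(4)] by simp
  have he: "homog n (lm X3 e)" using e(2,3) by (cases n) (auto intro: homog_lm)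
  have de1: "fa_d (lm X1 e) = lm X3 (lm X3 e) - lm X1 (fa_d e)" using e(1) by (rule d_lm1)
  have cob1: "fa_d (lm X1 e) \<in> coboundaries" by (rule cob_d[OF fs_lm[OF e(1)]])
  show ?case
  proof (cases "even n")
    case False
    then obtain m where m': "n = 2 * m + 1" by (rule oddE)
    then have m: "n = Suc (2 * m)" by simp
    have rn: "rr n = lm X3 (U m)" using m by (simp add: rr_def)
    have rSn: "rr (Suc n) = U (Suc m)" using m by (simp add: rr_def)
    define a2 where "a2 = a + lm X3 e - (\<lambda>w. l * lm X1 (U m) w)"
    have fsa2: "fa_finsupp a2" using fsa e(1) by (simp add: a2_def)
    have hU: "homog n (lm X1 (U m))" unfolding m by (intro homog_lm homog_U)
    have ha2: "homog n a2" unfolding a2_def using ha(1) he hU by (intro homog_minus homog_plus homog_smult)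
    have da2: "fa_d a2 = 0"
    proof -
      have "fa_d a2 = fa_d a + fa_d (lm X3 e) - fa_d (\<lambda>w. l * lm X1 (U m) w)"
        using fsa e(1) by (simp add: a2_def d_plus d_minus del: plus_fun_apply minus_apply)
      also have "\<dots> = lm X3 b - lm X3 (fa_d e) - (\<lambda>w. l * lm X3 (lm X3 (U m)) w)"
        using e(1) by (simp add: da d_lm3 d_smult d_lm1)
      also have "\<dots> = 0"
      proof (rule fa_ext)
        fix g w show "(lm X3 b - lm X3 (fa_d e) - (\<lambda>w. l * lm X3 (lm X3 (U m)) w)) (g # w) = 0 (g # w)"
          using ebw[of w] by (cases g) (simp_all add: algebra_simps rn)
      qed simp
      finally show ?thesis .
    qed
    obtain mu where mu: "a2 - (\<lambda>w. mu * rr n w) \<in> coboundaries" using Suc.IH[OF fsa2 ha2 da2] by blast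
    have eq: "z - (\<lambda>w. l * rr (Suc n) w) = lm X3 (a2 - (\<lambda>w. mu * rr n w)) + (\<lambda>w. mu * fa_d (lm X1 (U m)) w) + lm X2 c - fa_d (lm X1 e)"
    proof (rule fa_ext)
      show "(z - (\<lambda>w. l * rr (Suc n) w)) [] = (lm X3 (a2 - (\<lambda>w. mu * rr n w)) + (\<lambda>w. mu * fa_d (lm X1 (U m)) w) + lm X2 c - fa_d (lm X1 e)) []"
        using z0 by (simp add: de1 d_lm1 rSn)
      fix g w show "(z - (\<lambda>w. l * rr (Suc n) w)) (g # w) = (lm X3 (a2 - (\<lambda>w. mu * rr n w)) + (\<lambda>w. mu * fa_d (lm X1 (U m)) w) + lm X2 c - fa_d (lm X1 e)) (g # w)"
        using ebw[of w] by (cases g) (simp_all add: de1 d_lm1 rn rSn a2_def a_def b_def c_def algebra_simps)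
    qed
    have "lm X3 (a2 - (\<lambda>w. mu * rr n w)) + (\<lambda>w. mu * fa_d (lm X1 (U m)) w) + lm X2 c - fa_d (lm X1 e) \<in> coboundaries"
      by (intro cob_minus cob_plus cob_lm3 mu cob_smult cob_d fs_lm fs_U cobc cob1)
    then have "z - (\<lambda>w. l * rr (Suc n) w) \<in> coboundaries" by (subst eq)
    then show ?thesis by blast
  next
    case True
    then obtain m where m: "n = 2 * m" by (rule evenE)
    have rn: "rr n = U m" using m by (simp add: rr_def)
    have rSn: "rr (Suc n) = lm X3 (U m)" using m by (simp add: rr_def)
    define a1 where "a1 = a + lm X3 e"
    have fsa1: "fa_finsupp a1" using fsa e(1) by (simp add: a1_def)
    have ha1: "homog n a1" unfolding a1_def using ha(1) he by (intro homog_plus)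
    have da1': "fa_d a1 = (\<lambda>w. l * lm X3 (U m) w)"
    proof -
      have "fa_d a1 = lm X3 b - lm X3 (fa_d e)"
        using fsa e(1) by (simp add: a1_def d_plus da d_lm3 del: plus_fun_apply minus_apply uminus_apply)
      also have "\<dots> = (\<lambda>w. l * lm X3 (U m) w)"
      proof (rule fa_ext)
        fix g w show "(lm X3 b - lm X3 (fa_d e)) (g # w) = (\<lambda>w. l * lm X3 (U m) w) (g # w)"
          using ebw[of w] by (cases g) (simp_all add: algebra_simps rn)
      qed simp
      finally show ?thesis .
    qed
    have "(\<lambda>w. l * lm X3 (U m) w) \<in> coboundaries" using da1' cob_d[OF fsa1] by simp
    then have "l * lm X3 (U m) (X3 # w0 m) = 0" using good_w0 by (intro cob_good) auto
    then have l0: "l = 0" by (simp add: U_w0)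
    have da1: "fa_d a1 = 0" using da1' l0 by (simp add: zero_fun_def)
    obtain mu where mu: "a1 - (\<lambda>w. mu * rr n w) \<in> coboundaries" using Suc.IH[OF fsa1 ha1 da1] by blast
    have eq: "z - (\<lambda>w. mu * rr (Suc n) w) = lm X3 (a1 - (\<lambda>w. mu * rr n w)) + lm X2 c - fa_d (lm X1 e)"
    proof (rule fa_ext)
      show "(z - (\<lambda>w. mu * rr (Suc n) w)) [] = (lm X3 (a1 - (\<lambda>w. mu * rr n w)) + lm X2 c - fa_d (lm X1 e)) []"
        using z0 by (simp add: de1 rSn)
      fix g w show "(z - (\<lambda>w. mu * rr (Suc n) w)) (g # w) = (lm X3 (a1 - (\<lambda>w. mu * rr n w)) + lm X2 c - fa_d (lm X1 e)) (g # w)"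
        using ebw[of w] l0 by (cases g) (simp_all add: de1 rn rSn a1_def a_def b_def c_def algebra_simps)
    qed
    have "lm X3 (a1 - (\<lambda>w. mu * rr n w)) + lm X2 c - fa_d (lm X1 e) \<in> coboundaries"
      by (intro cob_minus cob_plus cob_lm3 mu cobc cob1)
    then have "z - (\<lambda>w. mu * rr (Suc n) w) \<in> coboundaries" by (subst eq)
    then show ?thesis by blast
  qed
qed



lemma pow_c_mult: "fa_mult (fa_pow cls_c i) G = (lm X3 ^^ i) (G::'k::comm_ring_1 fa)"
proof (induction i)
  case 0 then show ?case by (simp add: fa_pow_def)
next
  case (Suc i)
  have "fa_pow cls_c (Suc i) = lm X3 (fa_pow (cls_c::'k fa) i)"
    by (simp add: fa_pow_def cls_c_def lm_def)
  then show ?case using Suc by (simp add: mult_lm)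
qed

lemma cls_u_eq: "(cls_u::'k::comm_ring_1 fa) = lm X1 (lm X3 fa_one) + lm X3 (lm X1 fa_one)"
  unfolding cls_u_def fa_add_eq mult_gen by (simp add: fa_gen_lm)

lemma pow_u: "fa_pow cls_u m = (U m::'k::comm_ring_1 fa)"
proof (induction m)
  case 0 then show ?case by (simp add: fa_pow_def)
next
  case (Suc m)
  have "fa_pow cls_u (Suc m) = fa_mult cls_u (fa_pow (cls_u::'k fa) m)"
    by (simp add: fa_pow_def)
  also have "\<dots> = fa_mult cls_u (U m)" by (simp only: Suc)
  also have "\<dots> = fa_mult (lm X1 (lm X3 fa_one) + lm X3 (lm X1 fa_one)) (U m)" by (simp only: cls_u_eq)
  also have "\<dots> = U (Suc m)" by (simp add: mult_plus mult_lm del: plus_fun_apply)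
  finally show ?case .
qed

lemma T_eq: "fa_mult (fa_pow cls_c i) (fa_pow cls_u j) = ((lm X3 ^^ i) (U j) :: 'k::comm_ring_1 fa)"
  by (simp add: pow_c_mult pow_u)

definition bnd :: "'k::zero poly poly \<Rightarrow> nat" where
  "bnd p = (\<Sum>i\<le>degree p. degree (coeff p i))"

lemma bnd: "degree (coeff p i) \<le> bnd p"
proof (cases "i \<le> degree p")
  case True then show ?thesis unfolding bnd_def by (intro member_le_sum) auto
next
  case False then show ?thesis by (simp add: coeff_eq_0)
qed

lemma ev_rep_alt:
  assumes "degree p \<le> A" "\<And>i. degree (coeff p i) \<le> B"
  shows "ev_rep p w = (\<Sum>i\<le>A. \<Sum>j\<le>B. coeff (coeff p i) j * ((lm X3 ^^ i) (U j) :: 'k::comm_ring_1 fa) w)"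
proof -
  have "ev_rep p w = (\<Sum>i\<le>degree p. \<Sum>j\<le>B. coeff (coeff p i) j * ((lm X3 ^^ i) (U j) :: 'k fa) w)"
    unfolding ev_rep_def T_eq
  proof (rule sum.cong[OF refl], rule sum.mono_neutral_left)
    fix i show "finite {..B}" by simp
    show "{..degree (coeff p i)} \<subseteq> {..B}" using assms(2)[of i] by auto
    show "\<forall>j\<in>{..B} - {..degree (coeff p i)}. coeff (coeff p i) j * (lm X3 ^^ i) (U j) w = 0"
      by (auto simp: coeff_eq_0)
  qed
  also have "\<dots> = (\<Sum>i\<le>A. \<Sum>j\<le>B. coeff (coeff p i) j * ((lm X3 ^^ i) (U j) :: 'k fa) w)"
    by (rule sum.mono_neutral_left) (use assms(1) in \<open>auto simp: coeff_eq_0\<close>)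
  finally show ?thesis .
qed

lemma ev_rep_plus: "ev_rep (p + q) = ev_rep p + (ev_rep q :: 'k::comm_ring_1 fa)"
proof
  fix w
  let ?A = "max (degree p) (degree q)" and ?B = "bnd p + bnd q"
  have dp: "\<And>i. degree (coeff p i) \<le> ?B" "\<And>i. degree (coeff q i) \<le> ?B"
    by (meson bnd le_add1 le_add2 le_trans)+
  have dpq: "\<And>i. degree (coeff (p + q) i) \<le> ?B"
    using dp by (auto intro: le_trans[OF degree_add_le])
  show "ev_rep (p + q) w = (ev_rep p + ev_rep q) w"
    using ev_rep_alt[of "p + q" ?A ?B w, OF _ dpq] ev_rep_alt[of p ?A ?B w, OF _ dp(1)]
      ev_rep_alt[of q ?A ?B w, OF _ dp(2)]
    by (simp add: degree_add_le sum.distrib distrib_right)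
qed

lemma ev_rep_zero: "ev_rep 0 = (0::'k::comm_ring_1 fa)"
  by (simp add: ev_rep_def fun_eq_iff)

lemma ev_rep_monom: "ev_rep (monom (monom c j) i) = (\<lambda>w. c * ((lm X3 ^^ i) (U j) :: 'k::comm_ring_1 fa) w)"
proof
  fix w
  have "ev_rep (monom (monom c j) i) w = (\<Sum>i'\<le>i. \<Sum>j'\<le>j. coeff (coeff (monom (monom c j) i) i') j' * ((lm X3 ^^ i') (U j') :: 'k fa) w)"
    by (rule ev_rep_alt) (auto simp: coeff_monom degree_monom_le)
  also have "\<dots> = (\<Sum>i'\<le>i. if i' = i then c * ((lm X3 ^^ i) (U j) :: 'k fa) w else 0)"
  proof (rule sum.cong[OF refl])
    fix i' show "(\<Sum>j'\<le>j. coeff (coeff (monom (monom c j) i) i') j' * ((lm X3 ^^ i') (U j') :: 'k fa) w) = (if i' = i then c * ((lm X3 ^^ i) (U j) :: 'k fa) w else 0)"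
    proof (cases "i' = i")
      case True
      have "(\<Sum>j'\<le>j. coeff (coeff (monom (monom c j) i) i') j' * ((lm X3 ^^ i') (U j') :: 'k fa) w) = (\<Sum>j'\<le>j. if j' = j then c * ((lm X3 ^^ i) (U j) :: 'k fa) w else 0)"
        by (rule sum.cong[OF refl]) (auto simp: coeff_monom True)
      then show ?thesis using True by simp
    qed (simp add: coeff_monom)
  qed
  also have "\<dots> = c * ((lm X3 ^^ i) (U j) :: 'k fa) w" by simp
  finally show "ev_rep (monom (monom c j) i) w = c * ((lm X3 ^^ i) (U j) :: 'k fa) w" .
qed

lemma rr_ev: "(\<lambda>w. c * rr n w) = ev_rep (monom (monom c (n div 2)) (n mod 2))"
  by (simp add: ev_rep_monom rr_def)

lemma ev_rep_sum: "finite L \<Longrightarrow> \<exists>p. ev_rep p = (\<lambda>w. \<Sum>n\<in>L. f n * (rr n w :: 'k::comm_ring_1))"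
proof (induction L rule: finite_induct)
  case empty then show ?case using ev_rep_zero by (metis sum.empty zero_fun_def)
next
  case (insert x L)
  then obtain p where p: "ev_rep p = (\<lambda>w. \<Sum>n\<in>L. f n * (rr n w :: 'k))" by blast
  have "ev_rep (p + monom (monom (f x) (x div 2)) (x mod 2)) = (\<lambda>w. \<Sum>n\<in>insert x L. f n * (rr n w :: 'k))"
    using insert by (simp add: ev_rep_plus p rr_ev[symmetric] fun_eq_iff)
  then show ?case by blast
qed

lemma surj_part:
  assumes "(z::'k::comm_ring_1 fa) \<in> cocycles" shows "\<exists>p. cohomologous z (ev_rep p)"
proof -
  have fs: "fa_finsupp z" and dz: "fa_d z = 0" using assms by (auto simp: cocycles_def fa_zero_eq)
  let ?L = "length ` {w. z w \<noteq> 0}"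
  have finL: "finite ?L" using fs by (simp add: fa_finsupp_def)
  have "\<forall>n. \<exists>l. trunc n z - (\<lambda>w. l * rr n w) \<in> coboundaries"
  proof
    fix n
    have "fa_d (trunc n z) = trunc (Suc n) (fa_d z)" using fs by (rule d_trunc)
    also have "\<dots> = 0" using dz by (simp add: trunc_def fun_eq_iff)
    finally show "\<exists>l. trunc n z - (\<lambda>w. l * rr n w) \<in> coboundaries"
      using fs by (intro main) (auto simp: homog_trunc)
  qed
  then obtain f where f: "\<And>n. trunc n z - (\<lambda>w. f n * rr n w) \<in> coboundaries" by metis
  obtain p where p: "ev_rep p = (\<lambda>w. \<Sum>n\<in>?L. f n * (rr n w :: 'k))" using ev_rep_sum[OF finL] by blast
  have zsum: "z = (\<lambda>w. \<Sum>n\<in>?L. trunc n z w)"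
  proof
    fix w show "z w = (\<Sum>n\<in>?L. trunc n z w)"
    proof (cases "z w = 0")
      case True then show ?thesis by (auto intro!: sum.neutral simp: trunc_def)
    next
      case False
      then have "length w \<in> ?L" by auto
      then show ?thesis using finL by (simp add: trunc_def sum.delta')
    qed
  qed
  have "z - ev_rep p = (\<lambda>w. \<Sum>n\<in>?L. (trunc n z - (\<lambda>w. f n * rr n w)) w)"
    by (subst zsum) (simp add: p fun_eq_iff sum_subtractf)
  also have "\<dots> \<in> coboundaries" by (rule cob_sum[OF finL]) (rule f)
  finally show ?thesis by (auto simp: cohomologous_def fa_minus_eq)
qed

lemma double_delta: "finite A \<Longrightarrow> finite B \<Longrightarrow> a \<in> A \<Longrightarrow> b \<in> B \<Longrightarrow>
  (\<Sum>i\<in>A. \<Sum>j\<in>B. if i = a \<and> j = b then X else (0::'a::comm_monoid_add)) = X"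
proof -
  assume as: "finite A" "finite B" "a \<in> A" "b \<in> B"
  have "\<And>i. (\<Sum>j\<in>B. if i = a \<and> j = b then X else 0) = (if i = a then X else 0)"
    using as by (auto simp: sum.delta)
  then show ?thesis using as by (simp add: sum.delta)
qed

lemma monom2: "([:0, 0, 1:] :: 'a::comm_ring_1 poly) = monom 1 2"
  by (simp add: monom_Suc numeral_2_eq_2 monom_0)

lemma part4:
  fixes p :: "'k::comm_ring_1 poly poly"
  shows "ev_rep p \<in> coboundaries \<longleftrightarrow> [:0, 0, 1:] dvd p"
proof
  assume cob: "ev_rep p \<in> coboundaries"
  let ?A = "max (degree p) 1"
  have c0: "coeff p 0 = 0"
  proof (rule poly_eqI)
    fix k
    have "ev_rep p (w0 k) = 0" using cob good_w0 by (intro cob_good) auto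
    moreover have "ev_rep p (w0 k) = (\<Sum>i\<le>?A. \<Sum>j\<le>bnd p + k. coeff (coeff p i) j * ((lm X3 ^^ i) (U j) :: 'k fa) (w0 k))"
      by (rule ev_rep_alt) (auto intro: le_trans[OF bnd])
    moreover have "\<dots> = coeff (coeff p 0) k"
      by (simp add: T_w0 if_distrib double_delta cong: if_cong)
    ultimately show "coeff (coeff p 0) k = coeff 0 k" by simp
  qed
  have c1: "coeff p 1 = 0"
  proof (rule poly_eqI)
    fix k
    have "ev_rep p (X3 # w0 k) = 0" using cob good_w0 by (intro cob_good) auto
    moreover have "ev_rep p (X3 # w0 k) = (\<Sum>i\<le>?A. \<Sum>j\<le>bnd p + k. coeff (coeff p i) j * ((lm X3 ^^ i) (U j) :: 'k fa) (X3 # w0 k))"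
      by (rule ev_rep_alt) (auto intro: le_trans[OF bnd])
    moreover have "\<dots> = coeff (coeff p 1) k"
      by (simp add: T_X3w0 if_distrib double_delta cong: if_cong)
    ultimately show "coeff (coeff p 1) k = coeff 0 k" by simp
  qed
  have "p = monom 1 2 * poly_shift 2 p"
  proof (rule poly_eqI)
    fix k show "coeff p k = coeff (monom 1 2 * poly_shift 2 p) k"
    proof (cases k)
      case (Suc k') then show ?thesis using c1 by (cases k') (auto simp: coeff_monom_mult coeff_poly_shift)
    qed (use c0 in \<open>simp add: coeff_monom_mult\<close>)
  qed
  then show "[:0, 0, 1:] dvd p" by (metis dvdI monom2)
next
  assume "[:0, 0, 1:] dvd p"
  then obtain q where q: "p = monom 1 2 * q" by (auto simp: monom2 elim!: dvdE)
  have c: "\<And>i. i < 2 \<Longrightarrow> coeff p i = 0" using q by (simp add: coeff_monom_mult)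
  have "ev_rep p = (\<lambda>w. \<Sum>i\<le>degree p. \<Sum>j\<le>bnd p. coeff (coeff p i) j * ((lm X3 ^^ i) (U j) :: 'k fa) w)"
    by (rule ext, rule ev_rep_alt) (auto simp: bnd)
  also have "\<dots> \<in> coboundaries"
  proof (intro cob_sum)
    fix i j
    show "(\<lambda>w. coeff (coeff p i) j * ((lm X3 ^^ i) (U j) :: 'k fa) w) \<in> coboundaries"
    proof (cases "i < 2")
      case True then show ?thesis using c cob_zero by (simp add: zero_fun_def)
    next
      case False then show ?thesis by (intro cob_smult cob_T) simp
    qed
  qed simp_all
  finally show "ev_rep p \<in> coboundaries" .
qed

theorem proposition2p1:
  fixes K :: "'k::{alg_closed_field, field_char_0} itself"
  shows "(cls_c :: 'k fa) \<in> cocycles \<and> (cls_u :: 'k fa) \<in> cocycles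
    \<and> fa_minus (fa_mult cls_c cls_u) (fa_mult cls_u (cls_c :: 'k fa)) \<in> coboundaries
    \<and> (\<forall>p :: 'k poly poly. ev_rep p \<in> coboundaries \<longleftrightarrow> [:0, 0, 1:] dvd p)
    \<and> (\<forall>z :: 'k fa. z \<in> cocycles \<longrightarrow> (\<exists>p :: 'k poly poly. cohomologous z (ev_rep p)))"
proof (intro conjI allI impI)
  have c: "(cls_c :: 'k fa) = lm X3 fa_one" by (simp add: cls_c_def fa_gen_lm)
  have u: "(cls_u :: 'k fa) = U 1" by (simp add: cls_u_eq)
  show "(cls_c :: 'k fa) \<in> cocycles"
    by (simp add: c cocycles_def fa_zero_eq d_lm3)
  show "(cls_u :: 'k fa) \<in> cocycles"
    by (simp only: u cocycles_def fa_zero_eq) (simp del: U.simps)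
  have cu: "fa_mult cls_c cls_u = lm X3 (U 1 :: 'k fa)" by (simp add: cls_c_def mult_gen u)
  have uc: "fa_mult cls_u cls_c = lm X1 (lm X3 (lm X3 fa_one)) + lm X3 (lm X1 (lm X3 (fa_one :: 'k fa)))"
    by (simp add: cls_u_eq c mult_plus mult_lm del: plus_fun_apply)
  have "fa_minus (fa_mult cls_c cls_u) (fa_mult cls_u (cls_c :: 'k fa)) = fa_d (lm X1 (lm X1 fa_one))"
  proof (rule fa_ext)
    fix g w show "fa_minus (fa_mult cls_c cls_u) (fa_mult cls_u (cls_c :: 'k fa)) (g # w) = fa_d (lm X1 (lm X1 fa_one)) (g # w)"
      by (cases g) (simp_all add: fa_minus_eq cu uc d_lm1 algebra_simps)
  qed (simp add: fa_minus_eq cu uc d_lm1)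
  then show "fa_minus (fa_mult cls_c cls_u) (fa_mult cls_u (cls_c :: 'k fa)) \<in> coboundaries"
    by (simp add: cob_d)
  fix p :: "'k poly poly"
  show "ev_rep p \<in> coboundaries \<longleftrightarrow> [:0, 0, 1:] dvd p" by (rule part4)
next
  fix z :: "'k fa" assume "z \<in> cocycles"
  then show "\<exists>p :: 'k poly poly. cohomologous z (ev_rep p)" by (rule surj_part)
qed


end
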